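(* For $\eta\in\mathbb{R}$, let $\mathfrak{s}_\eta=\mathfrak{r}_\eta\ltimes_{\mu_\eta}\mathbb{R}^4$, where $\mathfrak{r}_\eta=\langle e_1,e_2,e_3\rangle$ has non-zero brackets $[e_1,e_2]=e_2+\eta e_3$, $[e_1,e_3]=-\eta e_2+e_3$, $\mathbb{R}^4=\langle e_4,e_5,e_6,e_7\rangle$ is abelian, and $\mu_\eta:\mathfrak{r}_\eta\to\mathfrak{gl}(4,\mathbb{R})$ is given (in the basis $e_4,\dots,e_7$) by \[ \mu_\eta(e_1)=\begin{pmatrix}-\frac12&0&0&0\\0&-\frac12&0&0\\0&0&\frac12&\eta\\0&0&-\eta&\frac12\end{pmatrix},\ \mu_\eta(e_2)=\begin{pmatrix}0&0&0&0\\0&0&0&0\\0&-1&0&0\\-1&0&0&0\end{pmatrix},\ \mu_\eta(e_3)=\begin{pmatrix}0&0&0&0\\0&0&0&0\\-1&0&0&0\\0&1&0&0\end{pmatrix}. \] Then the 3-form $\varphi=e^{123}+e^{145}+e^{167}+e^{246}-e^{257}-e^{347}-e^{356}$ on $\mathfrak{s}_\eta$ (with $(e^i)$ dual to $(e_i)$) is exact, defines an ERP closed $\mathrm{G}_2$-structure, and has intrinsic torsion form $\tau=3e^{45}-3e^{67}$. For $\eta=0$ the Lie algebra is completely solvable, while for $\eta\neq0$ it is solvable but not completely solvable, and the Lie algebras $\mathfrak{s}_\eta$, $\eta\ge0$, are pairwise non-isomorphic.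
   Context: $\mathfrak{r}\ltimes_\mu\mathbb{R}^4$ denotes the semidirect product with bracket $[X,v]=\mu(X)v$ for $X\in\mathfrak{r}$, $v\in\mathbb{R}^4$. A $\mathrm{G}_2$-structure on a 7-dimensional Lie algebra is a 3-form $\varphi$ equal to $e^{123}+e^{145}+e^{167}+e^{246}-e^{257}-e^{347}-e^{356}$ in some basis; it determines an inner product $g_\varphi$ (making that basis orthonormal), a Hodge star $*_\varphi$ and norm $|\cdot|_\varphi$. It is closed if $d\varphi=0$ ($d$ the Chevalley–Eilenberg differential); then its intrinsic torsion form is the unique 2-form $\tau$ with $\tau\wedge*_\varphi\varphi=0$ and $d*_\varphi\varphi=\tau\wedge\varphi$. It is ERP if $d\tau=\frac16|\tau|_\varphi^2\varphi+\frac16*_\varphi(\tau\wedge\tau)$. A solvable Lie algebra is completely solvable if all $\mathrm{ad}_X$ have only real eigenvalues. *)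

theory Defs
  imports "Jordan_Normal_Form.Determinant" "Jordan_Normal_Form.Char_Poly"
begin

text \<open>A Lie algebra of dimension n is given by structure constants on the basis
  indexed 0..<n (index i corresponds to the paper's e_(i+1)):
  [e_i, e_j] = sum_k c i j k e_k.\<close>

type_synonym sconst = "nat \<Rightarrow> nat \<Rightarrow> nat \<Rightarrow> real"

definition lie_br :: "nat \<Rightarrow> sconst \<Rightarrow> real vec \<Rightarrow> real vec \<Rightarrow> real vec" where
  "lie_br n c x y = vec n (\<lambda>k. \<Sum>i<n. \<Sum>j<n. x $ i * y $ j * c i j k)"

definition ad_mat :: "nat \<Rightarrow> sconst \<Rightarrow> real vec \<Rightarrow> real mat" where
  "ad_mat n c X = mat n n (\<lambda>(k, j). \<Sum>i<n. X $ i * c i j k)"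

inductive_set lin_span :: "nat \<Rightarrow> real vec set \<Rightarrow> real vec set" for n S where
  zero: "0\<^sub>v n \<in> lin_span n S"
| gen: "x \<in> S \<Longrightarrow> x \<in> lin_span n S"
| add: "u \<in> lin_span n S \<Longrightarrow> v \<in> lin_span n S \<Longrightarrow> u + v \<in> lin_span n S"
| smult: "u \<in> lin_span n S \<Longrightarrow> a \<cdot>\<^sub>v u \<in> lin_span n S"

fun derived_series :: "nat \<Rightarrow> sconst \<Rightarrow> nat \<Rightarrow> real vec set" where
  "derived_series n c 0 = carrier_vec n"
| "derived_series n c (Suc k) =
     lin_span n {lie_br n c x y | x y. x \<in> derived_series n c k \<and> y \<in> derived_series n c k}"

definition solvable_lie :: "nat \<Rightarrow> sconst \<Rightarrow> bool" where
  "solvable_lie n c \<longleftrightarrow> (\<exists>k. derived_series n c k = {0\<^sub>v n})"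

definition completely_solvable :: "nat \<Rightarrow> sconst \<Rightarrow> bool" where
  "completely_solvable n c \<longleftrightarrow> solvable_lie n c \<and>
     (\<forall>X \<in> carrier_vec n. \<forall>z::complex.
        eigenvalue (map_mat complex_of_real (ad_mat n c X)) z \<longrightarrow> z \<in> \<real>)"

definition lie_isomorphic :: "nat \<Rightarrow> sconst \<Rightarrow> sconst \<Rightarrow> bool" where
  "lie_isomorphic n c c' \<longleftrightarrow> (\<exists>A \<in> carrier_mat n n. det A \<noteq> 0 \<and>
     (\<forall>x \<in> carrier_vec n. \<forall>y \<in> carrier_vec n.
        A *\<^sub>v lie_br n c x y = lie_br n c' (A *\<^sub>v x) (A *\<^sub>v y)))"

text \<open>Semidirect product r \<ltimes>_mu R^m: r has dimension d with structure constants cr,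
  the basis of R^m is indexed d..<d+m, and mu X is an m x m matrix acting on
  column vectors (basis indices shifted by d).  [X,v] = mu(X) v, R^m abelian.\<close>
definition semidirect :: "nat \<Rightarrow> sconst \<Rightarrow> (nat \<Rightarrow> real mat) \<Rightarrow> sconst" where
  "semidirect d cr mu i j k =
     (if i < d \<and> j < d then (if k < d then cr i j k else 0)
      else if i < d \<and> d \<le> j then (if d \<le> k then mu i $$ (k - d, j - d) else 0)
      else if d \<le> i \<and> j < d then (if d \<le> k then - (mu j $$ (k - d, i - d)) else 0)
      else 0)"

definition r_eta :: "real \<Rightarrow> sconst" where
  "r_eta \<eta> i j k =
     (if (i, j) = (0, 1) then (if k = 1 then 1 else if k = 2 then \<eta> else 0)
      else if (i, j) = (1, 0) then (if k = 1 then -1 else if k = 2 then - \<eta> else 0)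
      else if (i, j) = (0, 2) then (if k = 1 then - \<eta> else if k = 2 then 1 else 0)
      else if (i, j) = (2, 0) then (if k = 1 then \<eta> else if k = 2 then -1 else 0)
      else 0)"

definition mu_eta :: "real \<Rightarrow> nat \<Rightarrow> real mat" where
  "mu_eta \<eta> i =
     (if i = 0 then mat_of_rows_list 4
        [[-1/2, 0, 0, 0], [0, -1/2, 0, 0], [0, 0, 1/2, \<eta>], [0, 0, - \<eta>, 1/2]]
      else if i = 1 then mat_of_rows_list 4
        [[0, 0, 0, 0], [0, 0, 0, 0], [0, -1, 0, 0], [-1, 0, 0, 0]]
      else if i = 2 then mat_of_rows_list 4
        [[0, 0, 0, 0], [0, 0, 0, 0], [-1, 0, 0, 0], [0, 1, 0, 0]]
      else 0\<^sub>m 4 4)"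

definition s_eta :: "real \<Rightarrow> sconst" where
  "s_eta \<eta> = semidirect 3 (r_eta \<eta>) (mu_eta \<eta>)"

text \<open>A (possibly inhomogeneous) form is given by its coefficients in the basis
  e^I (I a finite set of indices, e^I = e^(i1) \<and> ... \<and> e^(ip) with i1 < ... < ip).\<close>

type_synonym form = "nat set \<Rightarrow> real"

definition is_form :: "nat \<Rightarrow> nat \<Rightarrow> form \<Rightarrow> bool" where
  "is_form n p \<alpha> \<longleftrightarrow> (\<forall>I. \<alpha> I \<noteq> 0 \<longrightarrow> I \<subseteq> {0..<n} \<and> card I = p)"

definition zero_form :: form where
  "zero_form = (\<lambda>I. 0)"

text \<open>Sign of the shuffle putting (sorted I, sorted J) in increasing order.\<close>
definition shuffle_sign :: "nat set \<Rightarrow> nat set \<Rightarrow> real" where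
  "shuffle_sign I J = (-1) ^ card {(i, j). i \<in> I \<and> j \<in> J \<and> j < i}"

definition wedge :: "form \<Rightarrow> form \<Rightarrow> form" where
  "wedge \<alpha> \<beta> = (\<lambda>K. \<Sum>I \<in> Pow K. shuffle_sign I (K - I) * \<alpha> I * \<beta> (K - I))"

text \<open>Value of a form on the basis vectors e_(k1),...,e_(kp).\<close>
definition inversions :: "nat list \<Rightarrow> nat" where
  "inversions ks = card {(a, b). a < b \<and> b < length ks \<and> ks ! b < ks ! a}"

definition form_eval :: "form \<Rightarrow> nat list \<Rightarrow> real" where
  "form_eval \<alpha> ks = (if distinct ks then (-1) ^ inversions ks * \<alpha> (set ks) else 0)"

text \<open>Chevalley--Eilenberg differential (trivial coefficients):
  d\<alpha>(x0,...,xp) = sum_(a<b) (-1)^(a+b) \<alpha>([xa,xb], x0,..^a..^b..,xp),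
  evaluated on increasing tuples of basis vectors.\<close>
definition CE_d :: "nat \<Rightarrow> sconst \<Rightarrow> form \<Rightarrow> form" where
  "CE_d n c \<alpha> = (\<lambda>K. if K \<subseteq> {0..<n} then
     (let ks = sorted_list_of_set K in
       \<Sum>a<length ks. \<Sum>b<length ks. if a < b then
          (-1) ^ (a + b) * (\<Sum>l<n. c (ks ! a) (ks ! b) l * form_eval \<alpha> (l # nths ks (- {a, b})))
        else 0)
     else 0)"

text \<open>Hodge star and norm for the inner product making e_0,...,e_(n-1) orthonormal
  and orientation e^(0...n-1).\<close>
definition hodge :: "nat \<Rightarrow> form \<Rightarrow> form" where
  "hodge n \<alpha> = (\<lambda>J. if J \<subseteq> {0..<n}
      then shuffle_sign ({0..<n} - J) J * \<alpha> ({0..<n} - J) else 0)"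

definition form_norm2 :: "nat \<Rightarrow> form \<Rightarrow> real" where
  "form_norm2 n \<alpha> = (\<Sum>I \<in> Pow {0..<n}. (\<alpha> I)\<^sup>2)"

text \<open>Basis form e^(k1...kp) written with the paper's 1-based indices (ks increasing).\<close>
definition eb :: "nat list \<Rightarrow> form" where
  "eb ks = (\<lambda>I. if I = (\<lambda>k. k - 1) ` set ks then 1 else 0)"

definition phi0 :: form where
  "phi0 = (\<lambda>I. eb [1,2,3] I + eb [1,4,5] I + eb [1,6,7] I + eb [2,4,6] I
              - eb [2,5,7] I - eb [3,4,7] I - eb [3,5,6] I)"

text \<open>A G2-structure: in some basis equal to the standard 3-form.  Here the form is
  considered in the given basis e_1..e_7 of the Lie algebra.\<close>
definition is_G2_in_basis :: "form \<Rightarrow> bool" where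
  "is_G2_in_basis \<phi> \<longleftrightarrow> \<phi> = phi0"

definition exact_form :: "nat \<Rightarrow> sconst \<Rightarrow> nat \<Rightarrow> form \<Rightarrow> bool" where
  "exact_form n c p \<alpha> \<longleftrightarrow> (\<exists>\<beta>. is_form n (p - 1) \<beta> \<and> CE_d n c \<beta> = \<alpha>)"

definition closed_G2 :: "sconst \<Rightarrow> form \<Rightarrow> bool" where
  "closed_G2 c \<phi> \<longleftrightarrow> is_G2_in_basis \<phi> \<and> CE_d 7 c \<phi> = zero_form"

definition torsion_form :: "sconst \<Rightarrow> form \<Rightarrow> form" where
  "torsion_form c \<phi> = (THE \<tau>. is_form 7 2 \<tau> \<and> wedge \<tau> (hodge 7 \<phi>) = zero_form
                               \<and> CE_d 7 c (hodge 7 \<phi>) = wedge \<tau> \<phi>)"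

definition ERP :: "sconst \<Rightarrow> form \<Rightarrow> bool" where
  "ERP c \<phi> \<longleftrightarrow> closed_G2 c \<phi> \<and>
     (let \<tau> = torsion_form c \<phi> in
        CE_d 7 c \<tau> = (\<lambda>I. (1/6) * form_norm2 7 \<tau> * \<phi> I + (1/6) * hodge 7 (wedge \<tau> \<tau>) I))"

definition tau0 :: form where
  "tau0 = (\<lambda>I. 3 * eb [4,5] I - 3 * eb [6,7] I)"

end

theory Submission imports Defs begin

lemma inversions_list:
  "inversions ks = length (filter (\<lambda>(a,b). ks!b < ks!a) (concat (map (\<lambda>b. map (\<lambda>a. (a,b)) [0..<b]) [0..<length ks])))"
proof -
  let ?L = "filter (\<lambda>(a,b). ks!b < ks!a) (concat (map (\<lambda>b. map (\<lambda>a. (a,b)) [0..<b]) [0..<length ks]))"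
  have st: "set ?L = {(a, b). a < b \<and> b < length ks \<and> ks ! b < ks ! a}" by (auto simp: image_iff)
  have inj: "inj_on (\<lambda>b. map (\<lambda>a. (a,b)) [0..<b]) X" for X
  proof (rule inj_onI)
    fix x y assume "map (\<lambda>a. (a,x)) [0..<x] = map (\<lambda>a. (a,y)) [0..<y]"
    hence "length (map (\<lambda>a. (a,x)) [0..<x]) = length (map (\<lambda>a. (a,y)) [0..<y])" by simp
    thus "x = y" by simp
  qed
  have "distinct ?L"
    by (auto intro!: distinct_filter distinct_concat inj simp: distinct_map) (auto simp: inj_on_def)
  thus ?thesis unfolding inversions_def st[symmetric] by (rule distinct_card)
qed

lemma set_eq_sort: "(set xs = set ys) = (sort (remdups xs) = sort (remdups ys))"
  by (metis sorted_list_of_set_sort_remdups set_remdups set_sort)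

lemma eb_set: "eb L (set ys) = (if sort (remdups ys) = sort (remdups (map (\<lambda>k. k - 1) L)) then 1 else 0)"
  unfolding eb_def by (simp only: set_map[symmetric] set_eq_sort)

lemma lessThan_upt: "{..<n} = set [0..<n]" by auto
lemma sum_set_upt: "sum f (set [m..<n]) = sum_list (map f [m..<n])"
  by (metis distinct_upt sum.distinct_set_conv_list)

lemma form_eval_simp: "form_eval \<alpha> ks = (if distinct ks then (-1) ^ inversions ks * \<alpha> (set ks) else 0)"
  by (simp add: form_eval_def)

lemma CE_d_set: "CE_d n c \<alpha> (set ks) = (if set ks \<subseteq> {0..<n} then
     (let ks = sort (remdups ks) in
       \<Sum>a\<leftarrow>[0..<length ks]. \<Sum>b\<leftarrow>[0..<length ks]. if a < b then
          (-1) ^ (a + b) * (\<Sum>l\<leftarrow>[0..<n]. c (ks ! a) (ks ! b) l * form_eval \<alpha> (l # nths ks (- {a, b})))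
        else 0)
     else 0)"
  unfolding CE_d_def sorted_list_of_set_sort_remdups lessThan_upt sum_set_upt by simp

lemma if0: "(if a = 0 then 0 else a * b) = (a * b :: real)" by simp
lemma if0': "(if a = 0 then 0 else s * a * b) = (s * a * b :: real)" by simp

lemma CE_d_set2: "CE_d n c \<alpha> (set ks) = (if set ks \<subseteq> {0..<n} then
     (let ks = sort (remdups ks) in
       \<Sum>a\<leftarrow>[0..<length ks]. \<Sum>b\<leftarrow>[0..<length ks]. if a < b then
          (-1) ^ (a + b) * (\<Sum>l\<leftarrow>[0..<n]. if c (ks ! a) (ks ! b) l = 0 then 0 else
              c (ks ! a) (ks ! b) l * form_eval \<alpha> (l # nths ks (- {a, b})))
        else 0)
     else 0)"
  unfolding if0 by (rule CE_d_set)

lemma nths_eq: "nths xs A = map fst (filter (\<lambda>p. snd p \<in> A) (zip xs [0..<length xs]))"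
  by (simp add: nths_def)

lemma mem_set_Cons': "(x \<in> set (y # ys)) = (x = y \<or> x \<in> set ys)" by simp
lemma set_Cons_subset: "(set (y # ys) \<subseteq> A) = (y \<in> A \<and> set ys \<subseteq> A)" by simp
lemma set_Nil_subset: "set [] \<subseteq> A" by simp
lemma mem_set_Nil: "(x \<in> set []) = False" by simp

lemma upt_small: "[0..<1] = [0::nat]" "[0..<2] = [0::nat,1]" "[0..<3] = [0::nat,1,2]"
  "[0..<4] = [0::nat,1,2,3]" "[0..<5] = [0::nat,1,2,3,4]" "[0..<6] = [0::nat,1,2,3,4,5]"
  "[0..<7] = [0::nat,1,2,3,4,5,6]" by (simp_all add: upt_rec)
lemmas comp_simps = CE_d_set2 form_eval_simp inversions_list eb_set nths_eq
   s_eta_def semidirect_def mu_eta_def mat_of_rows_list_def r_eta_def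
   mem_set_Cons' set_Cons_subset set_Nil_subset mem_set_Nil


lemma shuffle_set: "distinct xs \<Longrightarrow> distinct ys \<Longrightarrow>
  shuffle_sign (set xs) (set ys) = (-1) ^ length (filter (\<lambda>(i,j). j < i) (List.product xs ys))"
proof -
  assume d: "distinct xs" "distinct ys"
  have st: "set (filter (\<lambda>(i,j). j < i) (List.product xs ys)) = {(i, j). i \<in> set xs \<and> j \<in> set ys \<and> j < i}"
    by auto
  have dc: "distinct (filter (\<lambda>(i,j). j < i) (List.product xs ys))"
    using d by (simp add: distinct_product)
  show ?thesis unfolding shuffle_sign_def st[symmetric] distinct_card[OF dc] by (rule refl)
qed

lemma set_minus_list: "set ks - A = set (filter (\<lambda>x. x \<notin> A) ks)" by auto

lemma wedge_set: "distinct ks \<Longrightarrow> wedge \<alpha> \<beta> (set ks) =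
  sum_list (map (\<lambda>js. shuffle_sign (set js) (set (filter (\<lambda>x. x \<notin> set js) ks))
     * \<alpha> (set js) * \<beta> (set (filter (\<lambda>x. x \<notin> set js) ks))) (subseqs ks))"
proof -
  assume d: "distinct ks"
  have "wedge \<alpha> \<beta> (set ks) = (\<Sum>I \<in> set (map set (subseqs ks)).
      shuffle_sign I (set ks - I) * \<alpha> I * \<beta> (set ks - I))"
    unfolding wedge_def by (simp add: subseqs_powset)
  also have "\<dots> = sum_list (map (\<lambda>I. shuffle_sign I (set ks - I) * \<alpha> I * \<beta> (set ks - I)) (map set (subseqs ks)))"
    by (rule sum.distinct_set_conv_list[OF distinct_set_subseqs[OF d]])
  finally show ?thesis by (simp add: set_minus_list o_def)
qed

lemma wedge_set2: "distinct ks \<Longrightarrow> wedge \<alpha> \<beta> (set ks) =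
  sum_list (map (\<lambda>js. if \<alpha> (set js) = 0 then 0 else shuffle_sign (set js) (set (filter (\<lambda>x. x \<notin> set js) ks))
     * \<alpha> (set js) * \<beta> (set (filter (\<lambda>x. x \<notin> set js) ks))) (subseqs ks))"
  unfolding if0' by (rule wedge_set)

lemma hodge_set: "hodge n \<alpha> (set ks) = (if set ks \<subseteq> {0..<n} then
   shuffle_sign (set (filter (\<lambda>x. x \<notin> set ks) [0..<n])) (set ks) * \<alpha> (set (filter (\<lambda>x. x \<notin> set ks) [0..<n])) else 0)"
  unfolding hodge_def by (metis set_minus_list set_upt)

lemma hodge_set2: "hodge n \<alpha> (set ks) = (if set ks \<subseteq> {0..<n} then
   (if \<alpha> (set (filter (\<lambda>x. x \<notin> set ks) [0..<n])) = 0 then 0 else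
   shuffle_sign (set (filter (\<lambda>x. x \<notin> set ks) [0..<n])) (set ks) * \<alpha> (set (filter (\<lambda>x. x \<notin> set ks) [0..<n]))) else 0)"
  unfolding hodge_set by simp

lemma set_subset_upt: "(set (ks::nat list) \<subseteq> {0..<n}) = list_all (\<lambda>x. x < n) ks"
  by (auto simp: list_all_iff)

lemma enum_K: "list_all (\<lambda>ks. P (set ks)) (filter (\<lambda>ks. length ks = p) (subseqs [0..<7])) \<Longrightarrow>
   K \<subseteq> {0..<7} \<Longrightarrow> card K = p \<Longrightarrow> P K"
proof -
  assume a: "list_all (\<lambda>ks. P (set ks)) (filter (\<lambda>ks. length ks = p) (subseqs [0..<7]))"
    and K: "K \<subseteq> {0..<7}" "card K = p"
  from K have "K \<in> set ` set (subseqs [0..<7])" by (intro subset_subseqs) simp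
  then obtain ks where ks: "ks \<in> set (subseqs [0..<7])" "K = set ks" by auto
  have "distinct ks" using subseqs_distinctD[OF ks(1)] by simp
  hence "length ks = p" using K ks by (metis distinct_card)
  thus "P K" using a ks by (auto simp: list_all_iff)
qed

lemma form_eqI: "is_form n p \<alpha> \<Longrightarrow> is_form n p \<beta> \<Longrightarrow>
   (\<And>K. K \<subseteq> {0..<n} \<Longrightarrow> card K = p \<Longrightarrow> \<alpha> K = \<beta> K) \<Longrightarrow> \<alpha> = \<beta>"
  unfolding is_form_def by (rule ext) metis

lemma length_nths_2: "a < b \<Longrightarrow> b < length ks \<Longrightarrow> length (nths ks (- {a, b})) = length ks - 2"
proof -
  assume ab: "a < b" "b < length ks"
  have "{i. i < length ks \<and> i \<in> - {a, b}} = {0..<length ks} - {a, b}" by auto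
  hence "card {i. i < length ks \<and> i \<in> - {a, b}} = length ks - 2" using ab by simp
  thus ?thesis by (simp add: length_nths)
qed

lemma is_form_CE_d: "is_form n p \<alpha> \<Longrightarrow> is_form n (Suc p) (CE_d n c \<alpha>)"
proof (unfold is_form_def, intro allI impI)
  fix K assume f: "\<forall>I. \<alpha> I \<noteq> 0 \<longrightarrow> I \<subseteq> {0..<n} \<and> card I = p" and nz: "CE_d n c \<alpha> K \<noteq> 0"
  hence Ksub: "K \<subseteq> {0..<n}" unfolding CE_d_def by (auto split: if_splits)
  hence fin: "finite K" by (rule finite_subset) simp
  let ?ks = "sorted_list_of_set K"
  from nz Ksub obtain a b l where ab: "a < b" "b < length ?ks"
     and fe: "form_eval \<alpha> (l # nths ?ks (- {a, b})) \<noteq> 0"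
    unfolding CE_d_def Let_def
    by (smt (verit, ccfv_threshold) lessThan_iff mult_eq_0_iff sum.neutral)
  from fe have "distinct (l # nths ?ks (- {a, b}))" "\<alpha> (set (l # nths ?ks (- {a, b}))) \<noteq> 0"
    unfolding form_eval_def by (auto split: if_splits)
  hence "length (l # nths ?ks (- {a, b})) = p" using f by (metis distinct_card)
  hence "length ?ks = Suc p" using length_nths_2[OF ab] ab by simp
  thus "K \<subseteq> {0..<n} \<and> card K = Suc p" using Ksub fin by simp
qed

lemma is_form_wedge: "is_form n p \<alpha> \<Longrightarrow> is_form n q \<beta> \<Longrightarrow> is_form n (p + q) (wedge \<alpha> \<beta>)"
proof (unfold is_form_def, intro allI impI)
  fix K assume f: "\<forall>I. \<alpha> I \<noteq> 0 \<longrightarrow> I \<subseteq> {0..<n} \<and> card I = p"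
     and g: "\<forall>I. \<beta> I \<noteq> 0 \<longrightarrow> I \<subseteq> {0..<n} \<and> card I = q" and nz: "wedge \<alpha> \<beta> K \<noteq> 0"
  from nz obtain I where I0: "I \<in> Pow K" "shuffle_sign I (K - I) * \<alpha> I * \<beta> (K - I) \<noteq> 0"
    unfolding wedge_def using sum.not_neutral_contains_not_neutral by blast
  hence I: "I \<in> Pow K" "\<alpha> I \<noteq> 0" "\<beta> (K - I) \<noteq> 0" by auto
  have sub: "I \<subseteq> {0..<n}" "K - I \<subseteq> {0..<n}" and c: "card I = p" "card (K - I) = q" using f g I by auto
  have fin: "finite I" "finite (K - I)" using sub by (meson finite_atLeastLessThan finite_subset)+
  have KU: "K = I \<union> (K - I)" using I by auto
  have "card (I \<union> (K - I)) = card I + card (K - I)"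
    by (rule card_Un_disjoint[OF fin]) auto
  hence "card K = p + q" using KU c by simp
  moreover have "K \<subseteq> {0..<n}" using sub KU by blast
  ultimately show "K \<subseteq> {0..<n} \<and> card K = p + q" by simp
qed

lemma is_form_hodge: "is_form n p \<alpha> \<Longrightarrow> p \<le> n \<Longrightarrow> is_form n (n - p) (hodge n \<alpha>)"
proof (unfold is_form_def, intro allI impI)
  fix J assume f: "\<forall>I. \<alpha> I \<noteq> 0 \<longrightarrow> I \<subseteq> {0..<n} \<and> card I = p" and nz: "hodge n \<alpha> J \<noteq> 0"
  hence J: "J \<subseteq> {0..<n}" "\<alpha> ({0..<n} - J) \<noteq> 0" unfolding hodge_def by (auto split: if_splits)
  hence "card ({0..<n} - J) = p" using f by auto
  moreover have "card ({0..<n} - J) = n - card J" using J by (simp add: card_Diff_subset finite_subset)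
  moreover have "card J \<le> card {0..<n}" using J(1) by (intro card_mono) auto
  ultimately show "J \<subseteq> {0..<n} \<and> card J = n - p" using J by simp
qed

lemma is_form_eb: "(\<lambda>k. k - 1) ` set L \<subseteq> {0..<n} \<Longrightarrow> card ((\<lambda>k. k - 1) ` set L) = p \<Longrightarrow> is_form n p (eb L)"
  unfolding is_form_def eb_def by auto

lemma is_form_add: "is_form n p \<alpha> \<Longrightarrow> is_form n p \<beta> \<Longrightarrow> is_form n p (\<lambda>I. \<alpha> I + \<beta> I)"
  unfolding is_form_def by (metis add.right_neutral)
lemma is_form_diff: "is_form n p \<alpha> \<Longrightarrow> is_form n p \<beta> \<Longrightarrow> is_form n p (\<lambda>I. \<alpha> I - \<beta> I)"
  unfolding is_form_def by (metis diff_zero diff_self)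
lemma is_form_smult: "is_form n p \<alpha> \<Longrightarrow> is_form n p (\<lambda>I. a * \<alpha> I)"
  unfolding is_form_def by auto

lemma is_form_phi0: "is_form 7 3 phi0"
  unfolding phi0_def by (intro is_form_add is_form_diff is_form_eb) auto

lemma is_form_tau0: "is_form 7 2 tau0"
  unfolding tau0_def by (intro is_form_add is_form_diff is_form_eb is_form_smult) auto

definition beta0 :: form where "beta0 = (\<lambda>I. (-1/2) * eb [2,3] I + eb [4,5] I - eb [6,7] I)"

definition ftab :: "(nat list \<times> real) list \<Rightarrow> nat list \<Rightarrow> real" where
  "ftab T s = (case map_of T s of Some r \<Rightarrow> r | None \<Rightarrow> 0)"

lemma phi0_tab: "phi0 (set ys) = ftab [([0,1,2],1), ([0,3,4],1), ([0,5,6],1), ([1,3,5],1),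
   ([1,4,6],-1), ([2,3,6],-1), ([2,4,5],-1)] (sort (remdups ys))"
  unfolding phi0_def eb_set ftab_def by (auto split: if_split)

lemma tau0_tab: "tau0 (set ys) = ftab [([3,4],3), ([5,6],-3)] (sort (remdups ys))"
  unfolding tau0_def eb_set ftab_def by (auto split: if_split)

lemma beta0_tab: "beta0 (set ys) = ftab [([1,2],-1/2), ([3,4],1), ([5,6],-1)] (sort (remdups ys))"
  unfolding beta0_def eb_set ftab_def by (auto split: if_split)

lemmas comp_simps2 = comp_simps Let_def wedge_set2 hodge_set2 shuffle_set set_subset_upt upt_small phi0_tab tau0_tab beta0_tab ftab_def

lemma closed_phi: "CE_d 7 (s_eta e) phi0 = zero_form"
  apply (rule form_eqI[OF is_form_CE_d[OF is_form_phi0]])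
   apply (simp add: is_form_def zero_form_def)
  apply (rule enum_K[where p = 4])
    apply (simp_all add: comp_simps2 zero_form_def del: list.set)
  done

lemma is_form_beta0: "is_form 7 2 beta0"
  unfolding beta0_def by (intro is_form_add is_form_diff is_form_eb is_form_smult) auto


lemma exact_phi: "CE_d 7 (s_eta e) beta0 = phi0"
  apply (rule form_eqI[OF is_form_CE_d[OF is_form_beta0, simplified] is_form_phi0])
  apply (rule enum_K[where p = 3])
    apply (simp_all add: comp_simps2 beta0_def del: list.set)
  done


lemma is_form_psi: "is_form 7 4 (hodge 7 phi0)"
  using is_form_hodge[OF is_form_phi0] by simp
lemma dpsi: "CE_d 7 (s_eta e) (hodge 7 phi0) = wedge tau0 phi0"
  apply (rule form_eqI[OF is_form_CE_d[OF is_form_psi, simplified] is_form_wedge[OF is_form_tau0 is_form_phi0, simplified]])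
  apply (rule enum_K[where p = 5])
    apply (simp_all add: comp_simps2 del: list.set)
  done


lemma tau_psi: "wedge tau0 (hodge 7 phi0) = zero_form"
  apply (rule form_eqI[OF is_form_wedge[OF is_form_tau0 is_form_psi, simplified], of zero_form])
   apply (simp add: is_form_def zero_form_def)
  apply (rule enum_K[where p = 6])
    apply (simp_all add: comp_simps2 zero_form_def del: list.set)
  done


lemma sum_Pow_list: "distinct ks \<Longrightarrow> sum f (Pow (set ks)) = sum_list (map (\<lambda>js. f (set js)) (subseqs ks))"
proof -
  assume d: "distinct ks"
  have "sum f (Pow (set ks)) = sum f (set (map set (subseqs ks)))" by (simp add: subseqs_powset)
  also have "\<dots> = sum_list (map f (map set (subseqs ks)))"
    by (rule sum.distinct_set_conv_list[OF distinct_set_subseqs[OF d]])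
  finally show ?thesis by (simp add: o_def)
qed

lemma norm_tau0: "form_norm2 7 tau0 = 18"
proof -
  have "form_norm2 7 tau0 = sum (\<lambda>I. (tau0 I)\<^sup>2) (Pow (set [0..<7]))"
    unfolding form_norm2_def by simp
  also have "\<dots> = sum_list (map (\<lambda>js. (tau0 (set js))\<^sup>2) (subseqs [0..<7]))"
    by (rule sum_Pow_list) simp
  also have "\<dots> = 18"
    by (simp add: comp_simps2 del: list.set)
  finally show ?thesis .
qed

lemma ERP_eq: "CE_d 7 (s_eta e) tau0 =
  (\<lambda>I. (1/6) * form_norm2 7 tau0 * phi0 I + (1/6) * hodge 7 (wedge tau0 tau0) I)"
  unfolding norm_tau0
  apply (rule form_eqI[OF is_form_CE_d[OF is_form_tau0, simplified]
         is_form_add[OF is_form_smult[OF is_form_phi0] is_form_smult[OF is_form_hodge[OF is_form_wedge[OF is_form_tau0 is_form_tau0], simplified]]]])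
  apply (rule enum_K[where p = 3])
    apply (simp_all add: comp_simps2 del: list.set)
  done


lemma if0'': "(if b = 0 then 0 else s * a * b) = (s * a * b :: real)" by simp
lemma wedge_set3: "distinct ks \<Longrightarrow> wedge \<alpha> \<beta> (set ks) =
  sum_list (map (\<lambda>js. if \<beta> (set (filter (\<lambda>x. x \<notin> set js) ks)) = 0 then 0 else shuffle_sign (set js) (set (filter (\<lambda>x. x \<notin> set js) ks))
     * \<alpha> (set js) * \<beta> (set (filter (\<lambda>x. x \<notin> set js) ks))) (subseqs ks))"
  unfolding if0'' by (rule wedge_set)

lemma tau_unique:
  assumes f: "is_form 7 2 \<tau>" and w: "wedge \<tau> phi0 = wedge tau0 phi0"
  shows "\<tau> = tau0"
proof (rule form_eqI[OF f is_form_tau0])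
  have z: "\<And>js. length (remdups js) \<noteq> 2 \<Longrightarrow> \<tau> (set js) = 0"
    using f unfolding is_form_def by (metis card_set)
  have eqs: "list_all (\<lambda>ks. wedge \<tau> phi0 (set ks) = wedge tau0 phi0 (set ks)) (filter (\<lambda>ks. length ks = 5) (subseqs [0..<7]))"
    unfolding w by (simp add: list_all_iff)
  have goal2: "list_all (\<lambda>ks. \<tau> (set ks) = tau0 (set ks)) (filter (\<lambda>ks. length ks = 2) (subseqs [0..<7]))"
    using eqs
    apply (simp (no_asm_use) add: comp_simps2 wedge_set3 z del: list.set wedge_set2)
    apply (elim conjE)
    apply (intro conjI)
                        apply linarith+
    done
  fix K :: "nat set" assume K: "K \<subseteq> {0..<7}" "card K = 2"
  show "\<tau> K = tau0 K"
    by (rule enum_K[OF goal2 K])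
qed


lemma lie_br_ad: "y \<in> carrier_vec n \<Longrightarrow> lie_br n c x y = ad_mat n c x *\<^sub>v y"
proof (rule eq_vecI)
  assume y: "y \<in> carrier_vec n"
  fix k assume k: "k < dim_vec (ad_mat n c x *\<^sub>v y)"
  hence kn: "k < n" by (simp add: ad_mat_def)
  have "(ad_mat n c x *\<^sub>v y) $ k = (\<Sum>j<n. (\<Sum>i<n. x $ i * c i j k) * y $ j)"
    using kn y by (simp add: ad_mat_def scalar_prod_def row_def lessThan_atLeast0)
  also have "\<dots> = (\<Sum>j<n. \<Sum>i<n. x $ i * y $ j * c i j k)"
    by (simp add: sum_distrib_left sum_distrib_right mult_ac)
  also have "\<dots> = (\<Sum>i<n. \<Sum>j<n. x $ i * y $ j * c i j k)" by (rule sum.swap)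
  finally show "lie_br n c x y $ k = (ad_mat n c x *\<^sub>v y) $ k"
    using kn by (simp add: lie_br_def)
qed (simp add: lie_br_def ad_mat_def)

lemma ad_carrier[simp]: "ad_mat n c x \<in> carrier_mat n n" by (simp add: ad_mat_def)

lemma col_unit: "(B :: real mat) \<in> carrier_mat n m \<Longrightarrow> j < m \<Longrightarrow> col B j = B *\<^sub>v unit_vec m j"
proof -
  assume B: "B \<in> carrier_mat n m" and j: "j < m"
  have "col B j = col (B * 1\<^sub>m m) j" by (simp add: right_mult_one_mat[OF B])
  also have "\<dots> = B *\<^sub>v col (1\<^sub>m m) j" using B j by (intro col_mult2) auto
  finally show ?thesis using j by simp
qed

lemma intertwine:
  assumes A: "A \<in> carrier_mat n n" and x: "x \<in> carrier_vec n"
    and h: "\<forall>x \<in> carrier_vec n. \<forall>y \<in> carrier_vec n.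
        A *\<^sub>v lie_br n c x y = lie_br n c' (A *\<^sub>v x) (A *\<^sub>v y)"
  shows "ad_mat n c' (A *\<^sub>v x) * A = A * ad_mat n c x"
proof (rule mat_col_eqI)
  fix j assume "j < dim_col (A * ad_mat n c x)"
  hence j: "j < n" by (simp add: ad_mat_def)
  have e: "unit_vec n j \<in> carrier_vec n" by simp
  have "col (ad_mat n c' (A *\<^sub>v x) * A) j = ad_mat n c' (A *\<^sub>v x) *\<^sub>v col A j"
    by (rule col_mult2[of _ n n]) (use A j in auto)
  also have "\<dots> = ad_mat n c' (A *\<^sub>v x) *\<^sub>v (A *\<^sub>v unit_vec n j)"
    using A j by (simp add: col_unit)
  also have "\<dots> = lie_br n c' (A *\<^sub>v x) (A *\<^sub>v unit_vec n j)"
    using A by (simp add: lie_br_ad)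
  also have "\<dots> = A *\<^sub>v lie_br n c x (unit_vec n j)" using h x e by simp
  also have "\<dots> = A *\<^sub>v (ad_mat n c x *\<^sub>v unit_vec n j)" using e by (simp add: lie_br_ad)
  also have "\<dots> = A *\<^sub>v col (ad_mat n c x) j" using col_unit[OF ad_carrier j] by simp
  also have "\<dots> = col (A * ad_mat n c x) j" by (rule col_mult2[symmetric, of _ n n]) (use A j in auto)
  finally show "col (ad_mat n c' (A *\<^sub>v x) * A) j = col (A * ad_mat n c x) j" .
qed (use A in \<open>auto simp: ad_mat_def\<close>)

definition tr :: "real mat \<Rightarrow> real" where "tr M = (\<Sum>i<dim_row M. M $$ (i,i))"

lemma tr_comm: "A \<in> carrier_mat n m \<Longrightarrow> B \<in> carrier_mat m n \<Longrightarrow> tr (A * B) = tr (B * A)"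
proof -
  assume A: "A \<in> carrier_mat n m" and B: "B \<in> carrier_mat m n"
  have "tr (A * B) = (\<Sum>i<n. \<Sum>k<m. A $$ (i,k) * B $$ (k,i))"
    using A B by (simp add: tr_def scalar_prod_def row_def col_def lessThan_atLeast0)
  also have "\<dots> = (\<Sum>k<m. \<Sum>i<n. B $$ (k,i) * A $$ (i,k))"
    by (subst sum.swap) (simp add: mult.commute)
  also have "\<dots> = tr (B * A)"
    using A B by (simp add: tr_def scalar_prod_def row_def col_def lessThan_atLeast0)
  finally show ?thesis .
qed

lemma tr_sim:
  assumes A: "A \<in> carrier_mat n n" and B: "B \<in> carrier_mat n n" and M: "M \<in> carrier_mat n n"
    and M': "M' \<in> carrier_mat n n"
    and BA: "B * A = 1\<^sub>m n" and AB: "A * B = 1\<^sub>m n" and I: "M' * A = A * M"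
  shows "tr M' = tr M"
proof -
  have M'eq: "M' = A * M * B"
  proof -
    have "M' = M' * (A * B)" using AB M' by simp
    also have "\<dots> = (M' * A) * B" using M' A B by (simp add: assoc_mult_mat)
    also have "\<dots> = A * M * B" using I by simp
    finally show ?thesis .
  qed
  have "tr M' = tr (A * (M * B))" using M'eq A M B by (simp add: assoc_mult_mat)
  also have "\<dots> = tr ((M * B) * A)" using A M B by (intro tr_comm) auto
  also have "\<dots> = tr M" using BA M by (simp add: assoc_mult_mat[OF M B A])
  finally show ?thesis .
qed

lemma tr_sim2:
  assumes A: "A \<in> carrier_mat n n" and B: "B \<in> carrier_mat n n" and M: "M \<in> carrier_mat n n"
    and M': "M' \<in> carrier_mat n n"
    and BA: "B * A = 1\<^sub>m n" and AB: "A * B = 1\<^sub>m n" and I: "M' * A = A * M"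
  shows "tr (M' * M') = tr (M * M)"
proof (rule tr_sim[OF A B _ _ BA AB])
  have "M' * M' * A = M' * (M' * A)" using M' A by (simp add: assoc_mult_mat)
  also have "\<dots> = M' * (A * M)" using I by simp
  also have "\<dots> = (M' * A) * M" using M' A M by (simp add: assoc_mult_mat)
  also have "\<dots> = (A * M) * M" using I by simp
  also have "\<dots> = A * (M * M)" using M A by (simp add: assoc_mult_mat)
  finally show "M' * M' * A = A * (M * M)" .
qed (use M M' in auto)



lemma atLeast0_upt: "{0..<n} = set [0..<n]" by simp

lemmas csimps = s_eta_def semidirect_def mu_eta_def mat_of_rows_list_def r_eta_def

lemma tr_ad: "tr (ad_mat 7 (s_eta e) w) = 2 * w $ 0"
  by (simp add: tr_def ad_mat_def lessThan_upt sum_set_upt upt_small csimps)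

lemma tr_ad2: "tr (ad_mat 7 (s_eta e) w * ad_mat 7 (s_eta e) w) = (3 - 4 * e\<^sup>2) * (w $ 0)\<^sup>2"
  apply (simp add: tr_def ad_mat_def lessThan_upt atLeast0_upt sum_set_upt upt_small csimps scalar_prod_def row_def col_def del: set_upt)
  apply (simp add: power2_eq_square algebra_simps)
  done

lemma noniso:
  assumes e: "0 \<le> e" "0 \<le> e'" "e \<noteq> e'"
  shows "\<not> lie_isomorphic 7 (s_eta e) (s_eta e')"
proof
  assume "lie_isomorphic 7 (s_eta e) (s_eta e')"
  then obtain A where A: "A \<in> carrier_mat 7 7" and dA: "det A \<noteq> 0"
    and h: "\<forall>x \<in> carrier_vec 7. \<forall>y \<in> carrier_vec 7.
        A *\<^sub>v lie_br 7 (s_eta e) x y = lie_br 7 (s_eta e') (A *\<^sub>v x) (A *\<^sub>v y)"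
    unfolding lie_isomorphic_def by blast
  have "A \<in> Units (ring_mat TYPE(real) 7 ())" by (rule det_non_zero_imp_unit[OF A dA])
  then obtain B where B: "B \<in> carrier_mat 7 7" "B * A = 1\<^sub>m 7" "A * B = 1\<^sub>m 7"
    unfolding Units_def by (auto simp: ring_mat_simps)
  let ?x = "unit_vec 7 0 :: real vec"
  let ?w = "A *\<^sub>v ?x"
  have x: "?x \<in> carrier_vec 7" by simp
  have I: "ad_mat 7 (s_eta e') ?w * A = A * ad_mat 7 (s_eta e) ?x"
    by (rule intertwine[OF A x h])
  have t1: "tr (ad_mat 7 (s_eta e') ?w) = tr (ad_mat 7 (s_eta e) ?x)"
    by (rule tr_sim[OF A B(1) ad_carrier ad_carrier B(2,3) I])
  have t2: "tr (ad_mat 7 (s_eta e') ?w * ad_mat 7 (s_eta e') ?w) = tr (ad_mat 7 (s_eta e) ?x * ad_mat 7 (s_eta e) ?x)"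
    by (rule tr_sim2[OF A B(1) ad_carrier ad_carrier B(2,3) I])
  from t1 have w0: "?w $ 0 = 1" unfolding tr_ad by simp
  from t2 have "(3 - 4 * e'\<^sup>2) = (3 - 4 * e\<^sup>2)" unfolding tr_ad2 w0 by simp
  hence "e'\<^sup>2 = e\<^sup>2" by simp
  hence "e' = e" using e by (simp add: power2_eq_iff_nonneg)
  thus False using e by simp
qed


lemma span_sub:
  assumes "S \<subseteq> W" "0\<^sub>v n \<in> W" "\<And>u v. u \<in> W \<Longrightarrow> v \<in> W \<Longrightarrow> u + v \<in> W"
    "\<And>a u. u \<in> W \<Longrightarrow> a \<cdot>\<^sub>v u \<in> W"
  shows "lin_span n S \<subseteq> W"
proof
  fix x assume "x \<in> lin_span n S"
  thus "x \<in> W" by induction (use assms in auto)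
qed

definition W1 :: "real vec set" where "W1 = {v \<in> carrier_vec 7. v $ 0 = 0}"
definition W2 :: "real vec set" where
  "W2 = {v \<in> carrier_vec 7. v $ 0 = 0 \<and> v $ 1 = 0 \<and> v $ 2 = 0 \<and> v $ 3 = 0 \<and> v $ 4 = 0}"

lemma lie_br_comp: "k < n \<Longrightarrow> lie_br n c x y $ k = (\<Sum>i<n. \<Sum>j<n. x $ i * y $ j * c i j k)"
  by (simp add: lie_br_def)

lemma D1: "derived_series 7 (s_eta e) 1 \<subseteq> W1"
proof -
  have "derived_series 7 (s_eta e) 1 = lin_span 7 {lie_br 7 (s_eta e) x y |x y. x \<in> carrier_vec 7 \<and> y \<in> carrier_vec 7}"
    by simp
  also have "\<dots> \<subseteq> W1"
  proof (rule span_sub)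
    show "{lie_br 7 (s_eta e) x y |x y. x \<in> carrier_vec 7 \<and> y \<in> carrier_vec 7} \<subseteq> W1"
      by (auto simp: W1_def lie_br_comp lessThan_upt sum_set_upt upt_small csimps) (simp add: lie_br_def)
  qed (auto simp: W1_def)
  finally show ?thesis .
qed

lemma D2: "derived_series 7 (s_eta e) 2 \<subseteq> W2"
proof -
  have "derived_series 7 (s_eta e) 2 = lin_span 7 {lie_br 7 (s_eta e) x y |x y. x \<in> derived_series 7 (s_eta e) 1 \<and> y \<in> derived_series 7 (s_eta e) 1}"
    by (simp add: numeral_2_eq_2)
  also have "\<dots> \<subseteq> W2"
  proof (rule span_sub)
    have "lie_br 7 (s_eta e) x y \<in> W2" if "x \<in> W1" "y \<in> W1" for x y
      using that by (auto simp: W1_def W2_def lie_br_comp lessThan_upt sum_set_upt upt_small csimps) (simp add: lie_br_def)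
    thus "{lie_br 7 (s_eta e) x y |x y. x \<in> derived_series 7 (s_eta e) 1 \<and> y \<in> derived_series 7 (s_eta e) 1} \<subseteq> W2"
      using D1 by blast
  qed (auto simp: W2_def)
  finally show ?thesis .
qed

lemma D3: "derived_series 7 (s_eta e) 3 = {0\<^sub>v 7}"
proof
  have "derived_series 7 (s_eta e) 3 = lin_span 7 {lie_br 7 (s_eta e) x y |x y. x \<in> derived_series 7 (s_eta e) 2 \<and> y \<in> derived_series 7 (s_eta e) 2}"
    by (simp add: numeral_3_eq_3 numeral_2_eq_2)
  also have "\<dots> \<subseteq> {0\<^sub>v 7}"
  proof (rule span_sub)
    have "lie_br 7 (s_eta e) x y = 0\<^sub>v 7" if "x \<in> W2" "y \<in> W2" for x y
    proof (rule eq_vecI)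
      fix k assume "k < dim_vec (0\<^sub>v 7 :: real vec)"
      hence k: "k < 7" by simp
      show "lie_br 7 (s_eta e) x y $ k = 0\<^sub>v 7 $ k"
        using that k by (simp add: W2_def lie_br_comp lessThan_upt sum_set_upt upt_small csimps)
    qed (simp add: lie_br_def)
    thus "{lie_br 7 (s_eta e) x y |x y. x \<in> derived_series 7 (s_eta e) 2 \<and> y \<in> derived_series 7 (s_eta e) 2} \<subseteq> {0\<^sub>v 7}"
      using D2 by blast
  qed auto
  finally show "derived_series 7 (s_eta e) 3 \<subseteq> {0\<^sub>v 7}" .
next
  show "{0\<^sub>v 7} \<subseteq> derived_series 7 (s_eta e) 3"
    by (simp add: numeral_3_eq_3 lin_span.zero)
qed

lemma solv: "solvable_lie 7 (s_eta e)"
  unfolding solvable_lie_def using D3 by blast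



lemma mv_comp: "k < 7 \<Longrightarrow> v \<in> carrier_vec 7 \<Longrightarrow> (map_mat complex_of_real (ad_mat 7 c X) *\<^sub>v v) $ k =
   (\<Sum>j\<leftarrow>[0..<7]. complex_of_real (\<Sum>i\<leftarrow>[0..<7]. X $ i * c i j k) * v $ j)"
  by (simp add: ad_mat_def scalar_prod_def row_def atLeast0_upt lessThan_upt sum_set_upt upt_small del: set_upt)

lemma nonreal_cancel: "z \<notin> \<real> \<Longrightarrow> z * a = complex_of_real r * a \<Longrightarrow> a = 0"
proof -
  assume z: "z \<notin> \<real>" and h: "z * a = complex_of_real r * a"
  have "(z - complex_of_real r) * a = 0" using h by (simp add: algebra_simps)
  moreover have "z - complex_of_real r \<noteq> 0" using z by auto
  ultimately show "a = 0" by simp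
qed

lemma less7: "(k::nat) < 7 \<Longrightarrow> k = 0 \<or> k = 1 \<or> k = 2 \<or> k = 3 \<or> k = 4 \<or> k = 5 \<or> k = 6" by arith

lemma real_eigen:
  fixes X :: "real vec" and v :: "complex vec"
  assumes ev: "map_mat complex_of_real (ad_mat 7 (s_eta 0) X) *\<^sub>v v = z \<cdot>\<^sub>v v" and vc: "v \<in> carrier_vec 7"
    and z: "z \<notin> \<real>"
  shows "v = 0\<^sub>v 7"
proof -
  have "\<And>k. k < 7 \<Longrightarrow> (map_mat complex_of_real (ad_mat 7 (s_eta 0) X) *\<^sub>v v) $ k = z * v $ k"
    using ev vc by simp
  note E = this[of 0] this[of 1] this[of 2] this[of 3] this[of 4] this[of 5] this[of 6]
  note E' = E[simplified mv_comp[OF _ vc] upt_small csimps, simplified]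
  have z0: "z \<noteq> 0" using z by auto
  have v0: "v $ 0 = 0" using E'(1) z0 by simp
  have v1: "v $ 1 = 0" using E'(2) v0 by (intro nonreal_cancel[OF z, of _ "X $ 0"]) auto
  have v2: "v $ 2 = 0" using E'(3) v0 by (intro nonreal_cancel[OF z, of _ "X $ 0"]) auto
  have v3: "v $ 3 = 0" using E'(4) v0 by (intro nonreal_cancel[OF z, of _ "- X $ 0 / 2"]) simp
  have v4: "v $ 4 = 0" using E'(5) v0 by (intro nonreal_cancel[OF z, of _ "- X $ 0 / 2"]) simp
  have v5: "v $ 5 = 0" using E'(6) v0 v1 v2 v3 v4 by (intro nonreal_cancel[OF z, of _ "X $ 0 / 2"]) auto
  have v6: "v $ 6 = 0" using E'(7) v0 v1 v2 v3 v4 by (intro nonreal_cancel[OF z, of _ "X $ 0 / 2"]) auto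
  show ?thesis
  proof (rule eq_vecI)
    fix k assume "k < dim_vec (0\<^sub>v 7 :: complex vec)"
    hence "k < 7" by simp
    thus "v $ k = 0\<^sub>v 7 $ k" using less7 v0 v1 v2 v3 v4 v5 v6 by auto
  qed (use vc in simp)
qed


lemma dim_ad: "dim_row (map_mat complex_of_real (ad_mat 7 c X)) = 7" by (simp add: ad_mat_def)

lemma cs_iff: "completely_solvable 7 (s_eta e) \<longleftrightarrow> e = 0"
proof
  assume cs: "completely_solvable 7 (s_eta e)"
  show "e = 0"
  proof (rule ccontr)
    assume e: "e \<noteq> 0"
    let ?X = "unit_vec 7 0 :: real vec"
    let ?v = "vec 7 (\<lambda>k. if k = 1 then 1 else if k = 2 then - \<i> else 0) :: complex vec"
    let ?z = "Complex 1 e"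
    have vc: "?v \<in> carrier_vec 7" by simp
    have "map_mat complex_of_real (ad_mat 7 (s_eta e) ?X) *\<^sub>v ?v = ?z \<cdot>\<^sub>v ?v"
    proof (rule eq_vecI)
      fix k assume "k < dim_vec (?z \<cdot>\<^sub>v ?v)"
      hence k: "k < 7" by simp
      show "(map_mat complex_of_real (ad_mat 7 (s_eta e) ?X) *\<^sub>v ?v) $ k = (?z \<cdot>\<^sub>v ?v) $ k"
        unfolding mv_comp[OF k vc] using less7[OF k] k by (auto simp: upt_small csimps complex_eq_iff)
    qed (simp add: ad_mat_def)
    moreover have "?v \<noteq> 0\<^sub>v 7"
    proof
      assume "?v = 0\<^sub>v 7"
      hence "?v $ 1 = 0\<^sub>v 7 $ 1" by simp
      thus False by simp
    qed
    ultimately have "eigenvalue (map_mat complex_of_real (ad_mat 7 (s_eta e) ?X)) ?z"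
      unfolding eigenvalue_def eigenvector_def dim_ad using vc by blast
    hence "?z \<in> \<real>" using cs unfolding completely_solvable_def by auto
    thus False using e by (simp add: complex_is_Real_iff)
  qed
next
  assume e: "e = 0"
  show "completely_solvable 7 (s_eta e)"
    unfolding completely_solvable_def
  proof (intro conjI ballI allI impI)
    show "solvable_lie 7 (s_eta e)" by (rule solv)
    fix X :: "real vec" and z :: complex
    assume "X \<in> carrier_vec 7" "eigenvalue (map_mat complex_of_real (ad_mat 7 (s_eta e) X)) z"
    then obtain v where v: "v \<in> carrier_vec 7" "v \<noteq> 0\<^sub>v 7"
      "map_mat complex_of_real (ad_mat 7 (s_eta 0) X) *\<^sub>v v = z \<cdot>\<^sub>v v"
      unfolding eigenvalue_def eigenvector_def dim_ad e by blast
    show "z \<in> \<real>"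
    proof (rule ccontr)
      assume "z \<notin> \<real>"
      from real_eigen[OF v(3) v(1) this] v(2) show False by simp
    qed
  qed
qed


theorem mainTheorem6:
  shows "(\<forall>\<eta>::real.
            exact_form 7 (s_eta \<eta>) 3 phi0
          \<and> closed_G2 (s_eta \<eta>) phi0
          \<and> ERP (s_eta \<eta>) phi0
          \<and> torsion_form (s_eta \<eta>) phi0 = tau0
          \<and> solvable_lie 7 (s_eta \<eta>)
          \<and> (completely_solvable 7 (s_eta \<eta>) \<longleftrightarrow> \<eta> = 0))
       \<and> (\<forall>\<eta> \<eta>' :: real. 0 \<le> \<eta> \<longrightarrow> 0 \<le> \<eta>' \<longrightarrow> \<eta> \<noteq> \<eta>' \<longrightarrow>
            \<not> lie_isomorphic 7 (s_eta \<eta>) (s_eta \<eta>'))"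
proof (intro conjI allI impI)
  fix e :: real
  show ex: "exact_form 7 (s_eta e) 3 phi0"
    unfolding exact_form_def using is_form_beta0 exact_phi by (intro exI[of _ beta0]) simp
  show cl: "closed_G2 (s_eta e) phi0"
    unfolding closed_G2_def is_G2_in_basis_def using closed_phi by simp
  show tf: "torsion_form (s_eta e) phi0 = tau0"
    unfolding torsion_form_def
  proof (rule the_equality)
    show "is_form 7 2 tau0 \<and> wedge tau0 (hodge 7 phi0) = zero_form \<and>
          CE_d 7 (s_eta e) (hodge 7 phi0) = wedge tau0 phi0"
      using is_form_tau0 tau_psi dpsi by simp
  next
    fix \<tau> assume "is_form 7 2 \<tau> \<and> wedge \<tau> (hodge 7 phi0) = zero_form \<and>
          CE_d 7 (s_eta e) (hodge 7 phi0) = wedge \<tau> phi0"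
    hence f: "is_form 7 2 \<tau>" and w: "wedge \<tau> phi0 = wedge tau0 phi0" using dpsi by auto
    show "\<tau> = tau0" by (rule tau_unique[OF f w])
  qed
  show "ERP (s_eta e) phi0"
    unfolding ERP_def Let_def tf using cl ERP_eq by simp
  show "solvable_lie 7 (s_eta e)" by (rule solv)
  show "completely_solvable 7 (s_eta e) \<longleftrightarrow> e = 0" by (rule cs_iff)
next
  fix e e' :: real
  assume "0 \<le> e" "0 \<le> e'" "e \<noteq> e'"
  thus "\<not> lie_isomorphic 7 (s_eta e) (s_eta e')" by (rule noniso)
qed

end
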